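(* Under the setting of the context, define $c^{(m)}(i,y)=\sum_{u\in\mathcal V}q(i,y,u)\bigl[(v-g)(i,y+u/m)-(v-g)(i,y)\bigr]$ for $i\in E$, $y\in[0,1]^d$, and $$Z_{n+1}=R_{n+1}+v(\xi_{n+1},R_{n+1}/m)-\bigl[R_n+v(\xi_n,R_n/m)+(h-g)(\xi_n,R_n/m)+c^{(m)}(\xi_n,R_n/m)\bigr].$$ Then $\mathbb E(Z_{n+1}\mid\mathcal F_n)=0$ for all $n\ge0$, i.e. $R_{n+1}+v(\xi_{n+1},R_{n+1}/m)=R_n+v(\xi_n,R_n/m)+(h-g)(\xi_n,R_n/m)+c^{(m)}(\xi_n,R_n/m)+Z_{n+1}$ with $Z_{n+1}$ a martingale increment. Moreover there is a constant $C$, depending only on $E$, $P$ and $p$, such that $|c^{(m)}(i,y)|\le C/m$ for all $m\ge1$, $i\in E$, $y\in[0,1]^d$.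
   Context: Let $d\ge1$, $(e_1,\dots,e_d)$ the canonical basis, $\mathcal V=\{\pm e_1,\dots,\pm e_d\}$. Let $E$ be a finite set and $P$ an irreducible and aperiodic stochastic matrix on $E$ with unique invariant probability $\mu$. For $k\in E$, $y\in\mathbb R^d$, $p(k,y,\cdot)$ is a probability on $\mathcal V$, with $y\mapsto p(k,y,u)$ twice continuously differentiable with bounded derivatives. Let $g(k,y)=\sum_uu\,p(k,y,u)$, assumed to satisfy $\sum_k\mu(k)g(k,y)=0$ for all $y$, and $v(i,y)=\sum_{n\ge0}\sum_jP^n(i,j)g(j,y)$. Reflected kernel: for $k\in E$, $y\in[0,1]^d$, $\ell\le d$: if $0<y_\ell<1$, $q(k,y,\pm e_\ell)=p(k,y,\pm e_\ell)$; if $y_\ell=1$, $q(k,y,e_\ell)=0$, $q(k,y,-e_\ell)=p(k,y,e_\ell)+p(k,y,-e_\ell)$; if $y_\ell=0$, $q(k,y,-e_\ell)=0$, $q(k,y,e_\ell)=p(k,y,e_\ell)+p(k,y,-e_\ell)$; $h(k,y)=\sum_uu\,q(k,y,u)$. For $m\ge1$, $(\xi_n,R_n)_{n\ge0}$ is a Markov chain on $E\times\{0,\dots,m\}^d$ with $R_0=0$ and, with $\mathcal F_n=\sigma(\xi_0,\dots,\xi_n,R_0,\dots,R_n)$, $\mathbb P(\xi_{n+1}=k,R_{n+1}=R_n+u\mid\mathcal F_n)=P(\xi_n,k)q(\xi_n,R_n/m,u)$. *)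

theory Defs
  imports "HOL-Probability.Probability"
begin

fun matpow :: "('e::finite \<Rightarrow> 'e \<Rightarrow> real) \<Rightarrow> nat \<Rightarrow> 'e \<Rightarrow> 'e \<Rightarrow> real" where
  "matpow P 0 i j = (if i = j then 1 else 0)"
| "matpow P (Suc n) i j = (\<Sum>k\<in>UNIV. matpow P n i k * P k j)"

definition stochastic :: "('e::finite \<Rightarrow> 'e \<Rightarrow> real) \<Rightarrow> bool" where
  "stochastic P \<longleftrightarrow> (\<forall>i j. 0 \<le> P i j) \<and> (\<forall>i. (\<Sum>j\<in>UNIV. P i j) = 1)"

definition irreducible_mat :: "('e::finite \<Rightarrow> 'e \<Rightarrow> real) \<Rightarrow> bool" where
  "irreducible_mat P \<longleftrightarrow> (\<forall>i j. \<exists>n. matpow P n i j > 0)"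

definition aperiodic_mat :: "('e::finite \<Rightarrow> 'e \<Rightarrow> real) \<Rightarrow> bool" where
  "aperiodic_mat P \<longleftrightarrow> (\<forall>i. Gcd {n::nat. n > 0 \<and> matpow P n i i > 0} = 1)"

definition invariant_prob :: "('e::finite \<Rightarrow> 'e \<Rightarrow> real) \<Rightarrow> ('e \<Rightarrow> real) \<Rightarrow> bool" where
  "invariant_prob P \<mu> \<longleftrightarrow> (\<forall>i. 0 \<le> \<mu> i) \<and> (\<Sum>i\<in>UNIV. \<mu> i) = 1
      \<and> (\<forall>j. (\<Sum>i\<in>UNIV. \<mu> i * P i j) = \<mu> j)"

definition Vset :: "(real^'d) set" where
  "Vset = {axis l 1 | l. True} \<union> {- axis l 1 | l. True}"

definition unit_box :: "(real^'d) set" where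
  "unit_box = {y. \<forall>l. 0 \<le> y $ l \<and> y $ l \<le> 1}"

definition C2_bounded :: "(real^'d \<Rightarrow> real) \<Rightarrow> bool" where
  "C2_bounded f \<longleftrightarrow> (\<exists>G H. (\<forall>y. (f has_derivative (\<lambda>z. G y \<bullet> z)) (at y))
      \<and> (\<forall>y. (G has_derivative (\<lambda>z. H y *v z)) (at y))
      \<and> continuous_on UNIV H \<and> bounded (range G) \<and> bounded (range H))"

definition gdrift :: "('e \<Rightarrow> real^'d \<Rightarrow> real^'d \<Rightarrow> real) \<Rightarrow> 'e \<Rightarrow> real^'d \<Rightarrow> real^'d" where
  "gdrift p k y = (\<Sum>u\<in>Vset. p k y u *\<^sub>R u)"

definition vfun :: "('e::finite \<Rightarrow> 'e \<Rightarrow> real) \<Rightarrow> ('e \<Rightarrow> real^'d \<Rightarrow> real^'d \<Rightarrow> real)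
    \<Rightarrow> 'e \<Rightarrow> real^'d \<Rightarrow> real^'d" where
  "vfun P p i y = (\<Sum>n. \<Sum>j\<in>UNIV. matpow P n i j *\<^sub>R gdrift p j y)"

text \<open>Reflected kernel. For \<open>u = e_l\<close> / \<open>u = -e_l\<close> exactly one summand is active;
  for \<open>u \<notin> V\<close> the value is 0.\<close>
definition qref :: "('e \<Rightarrow> real^'d \<Rightarrow> real^'d \<Rightarrow> real) \<Rightarrow> 'e \<Rightarrow> real^'d \<Rightarrow> real^'d \<Rightarrow> real" where
  "qref p k y u = (\<Sum>l\<in>UNIV.
     (if u = axis l 1 then
        (if y $ l = 1 then 0
         else if y $ l = 0 then p k y (axis l 1) + p k y (- axis l 1)
         else p k y (axis l 1))
      else if u = - axis l 1 then
        (if y $ l = 0 then 0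
         else if y $ l = 1 then p k y (axis l 1) + p k y (- axis l 1)
         else p k y (- axis l 1))
      else 0))"

definition hdrift :: "('e \<Rightarrow> real^'d \<Rightarrow> real^'d \<Rightarrow> real) \<Rightarrow> 'e \<Rightarrow> real^'d \<Rightarrow> real^'d" where
  "hdrift p k y = (\<Sum>u\<in>Vset. qref p k y u *\<^sub>R u)"

definition cm :: "('e::finite \<Rightarrow> 'e \<Rightarrow> real) \<Rightarrow> ('e \<Rightarrow> real^'d \<Rightarrow> real^'d \<Rightarrow> real)
    \<Rightarrow> nat \<Rightarrow> 'e \<Rightarrow> real^'d \<Rightarrow> real^'d" where
  "cm P p m i y = (\<Sum>u\<in>Vset. qref p i y u *\<^sub>R
      ((vfun P p i (y + (1 / real m) *\<^sub>R u) - gdrift p i (y + (1 / real m) *\<^sub>R u))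
       - (vfun P p i y - gdrift p i y)))"

definition natfilt :: "'a measure \<Rightarrow> (nat \<Rightarrow> 'a \<Rightarrow> 'e) \<Rightarrow> (nat \<Rightarrow> 'a \<Rightarrow> real^'d) \<Rightarrow> nat \<Rightarrow> 'a measure" where
  "natfilt M \<xi> R n = sigma (space M)
     ((\<Union>i\<in>{..n}. {\<xi> i -` A \<inter> space M | A. True}) \<union> (\<Union>i\<in>{..n}. {R i -` A \<inter> space M | A. True}))"

definition reflected_chain :: "('e::finite \<Rightarrow> 'e \<Rightarrow> real) \<Rightarrow> ('e \<Rightarrow> real^'d \<Rightarrow> real^'d \<Rightarrow> real)
    \<Rightarrow> nat \<Rightarrow> 'a measure \<Rightarrow> (nat \<Rightarrow> 'a \<Rightarrow> 'e) \<Rightarrow> (nat \<Rightarrow> 'a \<Rightarrow> real^'d) \<Rightarrow> bool" where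
  "reflected_chain P p m M \<xi> R \<longleftrightarrow>
     prob_space M
   \<and> (\<forall>n. \<xi> n \<in> M \<rightarrow>\<^sub>M count_space UNIV)
   \<and> (\<forall>n. R n \<in> M \<rightarrow>\<^sub>M count_space UNIV)
   \<and> (\<forall>\<omega>\<in>space M. R 0 \<omega> = 0)
   \<and> (\<forall>n k u. u \<in> Vset \<longrightarrow>
        (AE \<omega> in M. real_cond_exp M (natfilt M \<xi> R n)
            (indicator {\<omega>\<in>space M. \<xi> (Suc n) \<omega> = k \<and> R (Suc n) \<omega> = R n \<omega> + u}) \<omega>
          = P (\<xi> n \<omega>) k * qref p (\<xi> n \<omega>) ((1 / real m) *\<^sub>R R n \<omega>) u))"

text \<open>\<open>Z_{n+1}\<close> as a function of \<open>(\<xi>_n,R_n,\<xi>_{n+1},R_{n+1})\<close>.\<close>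
definition Zinc :: "('e::finite \<Rightarrow> 'e \<Rightarrow> real) \<Rightarrow> ('e \<Rightarrow> real^'d \<Rightarrow> real^'d \<Rightarrow> real)
    \<Rightarrow> nat \<Rightarrow> 'e \<Rightarrow> real^'d \<Rightarrow> 'e \<Rightarrow> real^'d \<Rightarrow> real^'d" where
  "Zinc P p m x r x' r' =
     r' + vfun P p x' ((1 / real m) *\<^sub>R r')
     - (r + vfun P p x ((1 / real m) *\<^sub>R r)
          + (hdrift p x ((1 / real m) *\<^sub>R r) - gdrift p x ((1 / real m) *\<^sub>R r))
          + cm P p m x ((1 / real m) *\<^sub>R r))"

end

theory Submission
  imports Defs
begin


lemma matpow_nonneg: "stochastic P \<Longrightarrow> 0 \<le> matpow P n i j"
  by (induction n arbitrary: j) (auto simp: stochastic_def intro!: sum_nonneg)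

lemma matpow_rowsum: "stochastic P \<Longrightarrow> (\<Sum>j\<in>UNIV. matpow P n i j) = 1"
proof (induction n)
  case 0 then show ?case by simp
next
  case (Suc n)
  have "(\<Sum>j\<in>UNIV. matpow P (Suc n) i j) = (\<Sum>k\<in>UNIV. matpow P n i k * (\<Sum>j\<in>UNIV. P k j))"
    by (simp add: sum_distrib_left) (rule sum.swap)
  also have "\<dots> = 1" using Suc by (simp add: stochastic_def)
  finally show ?case .
qed

lemma matpow_le1: "stochastic P \<Longrightarrow> matpow P n i j \<le> 1"
proof -
  assume s: "stochastic P"
  have "matpow P n i j \<le> (\<Sum>j\<in>UNIV. matpow P n i j)"
    by (rule member_le_sum) (auto simp: matpow_nonneg[OF s])
  then show ?thesis using matpow_rowsum[OF s] by simp
qed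

lemma matpow_add: "matpow P (a + b) i j = (\<Sum>k\<in>UNIV. matpow P a i k * matpow P b k j)"
proof (induction b arbitrary: j)
  case 0
  have "(\<Sum>k\<in>UNIV. matpow P a i k * matpow P 0 k j) = (\<Sum>k\<in>UNIV. if k = j then matpow P a i k else 0)"
    by (intro sum.cong) auto
  then show ?case by simp
next
  case (Suc b)
  have "matpow P (a + Suc b) i j = (\<Sum>l\<in>UNIV. matpow P (a+b) i l * P l j)" by simp
  also have "\<dots> = (\<Sum>l\<in>UNIV. \<Sum>k\<in>UNIV. matpow P a i k * matpow P b k l * P l j)"
    by (simp add: Suc sum_distrib_right)
  also have "\<dots> = (\<Sum>k\<in>UNIV. matpow P a i k * (\<Sum>l\<in>UNIV. matpow P b k l * P l j))"
    by (subst sum.swap) (simp add: sum_distrib_left mult.assoc)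
  finally show ?case by simp
qed

lemma matpow_Suc': "matpow P (Suc n) i j = (\<Sum>k\<in>UNIV. P i k * matpow P n k j)"
proof -
  have "matpow P (1 + n) i j = (\<Sum>k\<in>UNIV. matpow P 1 i k * matpow P n k j)" by (rule matpow_add)
  moreover have "\<And>k. matpow P 1 i k = P i k"
  proof -
    fix k
    have "matpow P 1 i k = (\<Sum>l\<in>UNIV. (if i = l then 1 else 0) * P l k)" by simp
    also have "\<dots> = (\<Sum>l\<in>UNIV. if l = i then P l k else 0)" by (intro sum.cong) auto
    finally show "matpow P 1 i k = P i k" by simp
  qed
  ultimately show ?thesis by simp
qed

lemma matpow_inv: "invariant_prob P \<mu> \<Longrightarrow> (\<Sum>i\<in>UNIV. \<mu> i * matpow P n i j) = \<mu> j"
proof (induction n arbitrary: j)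
  case 0
  have "(\<Sum>i\<in>UNIV. \<mu> i * matpow P 0 i j) = (\<Sum>i\<in>UNIV. if i = j then \<mu> i else 0)"
    by (intro sum.cong) auto
  then show ?case by simp
next
  case (Suc n)
  have "(\<Sum>i\<in>UNIV. \<mu> i * matpow P (Suc n) i j) = (\<Sum>k\<in>UNIV. (\<Sum>i\<in>UNIV. \<mu> i * matpow P n i k) * P k j)"
    by (simp add: sum_distrib_left sum_distrib_right mult.assoc) (rule sum.swap)
  also have "\<dots> = \<mu> j" using Suc Suc.prems by (simp add: invariant_prob_def)
  finally show ?case .
qed

lemma doeblin:
  fixes A :: "'e::finite \<Rightarrow> 'e \<Rightarrow> real" and b :: "'e \<Rightarrow> real"
  assumes rows: "\<And>i. (\<Sum>k\<in>UNIV. A i k) = 1" and lb: "\<And>i k. \<delta> \<le> A i k"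
    and D: "\<And>k k'. \<bar>b k - b k'\<bar> \<le> D"
  shows "\<bar>(\<Sum>k\<in>UNIV. A i k * b k) - (\<Sum>k\<in>UNIV. A i' k * b k)\<bar> \<le> (1 - real CARD('e) * \<delta>) * D"
proof -
  define c where "c = Min (range b)"
  have cle: "c \<le> b k" for k unfolding c_def by (rule Min_le) auto
  have "c \<in> range b" unfolding c_def by (rule Min_in) auto
  then obtain k0 where k0: "c = b k0" by auto
  have bD: "b k - c \<le> D" for k using D[of k k0] k0 by auto
  have eq: "(\<Sum>k\<in>UNIV. A i k * b k) = (\<Sum>k\<in>UNIV. (A i k - \<delta>) * (b k - c)) + (\<Sum>k\<in>UNIV. \<delta> * b k) + (1 - real CARD('e) * \<delta>) * c"
    for i
  proof -
    have "(\<Sum>k\<in>UNIV. (A i k - \<delta>) * (b k - c)) = (\<Sum>k\<in>UNIV. A i k * b k) - (\<Sum>k\<in>UNIV. \<delta> * b k) - c * (\<Sum>k\<in>UNIV. A i k) + c * \<delta> * real CARD('e)"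
    proof -
      have "(\<Sum>k\<in>UNIV. (A i k - \<delta>) * (b k - c)) = (\<Sum>k\<in>UNIV. A i k * b k - \<delta> * b k - c * A i k + c * \<delta>)"
        by (intro sum.cong) (auto simp: algebra_simps)
      also have "\<dots> = (\<Sum>k\<in>UNIV. A i k * b k) - (\<Sum>k\<in>UNIV. \<delta> * b k) - c * (\<Sum>k\<in>UNIV. A i k) + c * \<delta> * real CARD('e)"
        by (simp add: sum.distrib sum_subtractf sum_distrib_left)
      finally show ?thesis .
    qed
    then show ?thesis using rows[of i] by (simp add: algebra_simps)
  qed
  have bnd: "0 \<le> (\<Sum>k\<in>UNIV. (A i k - \<delta>) * (b k - c)) \<and> (\<Sum>k\<in>UNIV. (A i k - \<delta>) * (b k - c)) \<le> (1 - real CARD('e) * \<delta>) * D" for i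
  proof
    show "0 \<le> (\<Sum>k\<in>UNIV. (A i k - \<delta>) * (b k - c))" using lb cle by (intro sum_nonneg) auto
    have "(\<Sum>k\<in>UNIV. (A i k - \<delta>) * (b k - c)) \<le> (\<Sum>k\<in>UNIV. (A i k - \<delta>) * D)"
      using lb bD by (intro sum_mono mult_left_mono) auto
    also have "\<dots> = (1 - real CARD('e) * \<delta>) * D" using rows[of i] by (simp add: sum_distrib_right[symmetric] sum_subtractf)
    finally show "(\<Sum>k\<in>UNIV. (A i k - \<delta>) * (b k - c)) \<le> (1 - real CARD('e) * \<delta>) * D" .
  qed
  show ?thesis using eq[of i] eq[of i'] bnd[of i] bnd[of i'] by (simp add: abs_le_iff)
qed




lemma semigroup_large:
  fixes S :: "nat set"
  assumes add: "\<And>a b. a \<in> S \<Longrightarrow> b \<in> S \<Longrightarrow> a + b \<in> S"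
    and pos: "\<And>a. a \<in> S \<Longrightarrow> 0 < a" and ne: "S \<noteq> {}" and g: "Gcd S = 1"
  shows "\<exists>N. \<forall>n\<ge>N. n \<in> S"
proof -
  define D where "D = {d::nat. 0 < d \<and> (\<exists>b. b \<in> S \<and> b + d \<in> S)}"
  obtain s where s: "s \<in> S" using ne by auto
  have "s \<in> D" unfolding D_def using s pos[OF s] add[OF s s] by auto
  define d0 where "d0 = (LEAST d. d \<in> D)"
  have d0D: "d0 \<in> D" unfolding d0_def by (rule LeastI) fact
  have d0min: "\<And>d. d \<in> D \<Longrightarrow> d0 \<le> d" unfolding d0_def by (rule Least_le)
  obtain b where b: "b \<in> S" "b + d0 \<in> S" and d0pos: "0 < d0" using d0D unfolding D_def by auto
  have prog: "\<forall>j\<le>k. k * b + j * d0 \<in> S" if "k \<ge> 1" for k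
    using that
  proof (induction k rule: dec_induct)
    case base
    show ?case
    proof (intro allI impI)
      fix j :: nat assume "j \<le> 1"
      then have "j = 0 \<or> j = 1" by auto
      then show "1 * b + j * d0 \<in> S" using b by auto
    qed
  next
    case (step k)
    show ?case
    proof (intro allI impI)
      fix j assume j: "j \<le> Suc k"
      show "Suc k * b + j * d0 \<in> S"
      proof (cases j)
        case 0
        have "k * b + 0 * d0 \<in> S" using step.IH by blast
        then show ?thesis using add[OF _ b(1), of "k * b"] 0 by (simp add: add.commute)
      next
        case (Suc j')
        then have "j' \<le> k" using j by auto
        then have "k * b + j' * d0 \<in> S" using step.IH by auto
        from add[OF this b(2)] show ?thesis using Suc by (simp add: algebra_simps)
      qed
    qed
  qed
  have dvd: "d0 dvd x" if x: "x \<in> S" for x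
  proof (rule ccontr)
    assume nd: "\<not> d0 dvd x"
    define q where "q = x div d0"
    define r where "r = x mod d0"
    have r0: "0 < r" using nd unfolding r_def by (simp add: dvd_eq_mod_eq_0)
    have rl: "r < d0" unfolding r_def using d0pos by simp
    have xq: "x = q * d0 + r" unfolding q_def r_def by simp
    define k where "k = x + 1"
    have qk: "q \<le> k" unfolding k_def q_def using div_le_dividend[of x d0] by linarith
    have k1: "k \<ge> 1" unfolding k_def by simp
    have m1: "k * b + q * d0 \<in> S" using prog[OF k1] qk by auto
    have "k * b + 0 * d0 \<in> S" using prog[OF k1] by blast
    then have "k * b + x \<in> S" using add[OF _ x] by simp
    then have "(k * b + q * d0) + r \<in> S" using xq by (simp add: algebra_simps)
    then have "r \<in> D" unfolding D_def using m1 r0 by blast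
    then show False using d0min rl by fastforce
  qed
  have "d0 dvd Gcd S" using dvd by (simp add: Gcd_greatest)
  then have d01: "d0 = 1" using g by simp
  have bpos: "0 < b" using pos[OF b(1)] .
  have "\<forall>n\<ge>b * b. n \<in> S"
  proof (intro allI impI)
    fix n assume n: "b * b \<le> n"
    define k where "k = n div b"
    define j where "j = n mod b"
    have "b \<le> k" unfolding k_def using n bpos by (metis div_le_mono nonzero_mult_div_cancel_right not_gr0)
    moreover have "j < b" unfolding j_def using bpos by simp
    ultimately have k1: "1 \<le> k" and jk: "j \<le> k" using bpos by auto
    have "k * b + j * d0 \<in> S" using prog[OF k1] jk by blast
    moreover have "n = k * b + j * d0" unfolding k_def j_def d01 by simp
    ultimately show "n \<in> S" by simp
  qed
  then show ?thesis by blast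
qed

lemma matpow_pos_path:
  assumes s: "stochastic P"
  shows "matpow P a i k * matpow P b k j \<le> matpow P (a + b) i j"
  unfolding matpow_add
  by (rule member_le_sum[where f = "\<lambda>k. matpow P a i k * matpow P b k j"]) (auto simp: matpow_nonneg[OF s])

lemma eventually_positive:
  fixes P :: "'e::finite \<Rightarrow> 'e \<Rightarrow> real"
  assumes s: "stochastic P" and irr: "irreducible_mat P" and aper: "aperiodic_mat P"
  shows "\<exists>N. \<forall>n\<ge>N. \<forall>i j. 0 < matpow P n i j"
proof -
  have "\<exists>N. \<forall>n\<ge>N. 0 < matpow P n i i" for i
  proof -
    define S where "S = {n::nat. n > 0 \<and> matpow P n i i > 0}"
    have g: "Gcd S = 1" using aper unfolding aperiodic_mat_def S_def by auto
    have ne: "S \<noteq> {}" using g by auto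
    have add: "a + b \<in> S" if "a \<in> S" "b \<in> S" for a b
    proof -
      have "0 < matpow P a i i * matpow P b i i" using that unfolding S_def by auto
      also have "\<dots> \<le> matpow P (a + b) i i" by (rule matpow_pos_path[OF s])
      finally show ?thesis using that unfolding S_def by auto
    qed
    have pos: "\<And>a. a \<in> S \<Longrightarrow> 0 < a" unfolding S_def by auto
    obtain N where "\<forall>n\<ge>N. n \<in> S" using semigroup_large[OF add pos ne g] by blast
    then show ?thesis unfolding S_def by auto
  qed
  then have "\<forall>i. \<exists>N. \<forall>n\<ge>N. 0 < matpow P n i i" by blast
  from choice[OF this] obtain Nf where Nf0: "\<forall>i. \<forall>n\<ge>Nf i. 0 < matpow P n i i" by blast
  then have Nf: "\<And>i n. n \<ge> Nf i \<Longrightarrow> 0 < matpow P n i i" by blast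
  have "\<forall>i. \<exists>f. \<forall>j. 0 < matpow P (f j) i j"
  proof
    fix i
    have "\<forall>j. \<exists>n. 0 < matpow P n i j" using irr unfolding irreducible_mat_def by blast
    from choice[OF this] show "\<exists>f. \<forall>j. 0 < matpow P (f j) i j" .
  qed
  from choice[OF this] obtain nf where nf0: "\<forall>i. \<forall>j. 0 < matpow P (nf i j) i j" by blast
  then have nf: "\<And>i j. 0 < matpow P (nf i j) i j" by blast
  define N where "N = (\<Sum>i\<in>UNIV. Nf i) + (\<Sum>i\<in>UNIV. \<Sum>j\<in>UNIV. nf i j)"
  have "0 < matpow P n i j" if n: "n \<ge> N" for n i j
  proof -
    have a: "Nf i \<le> (\<Sum>i\<in>UNIV. Nf i)" by (rule member_le_sum) auto
    have b1: "nf i j \<le> (\<Sum>j\<in>UNIV. nf i j)" by (rule member_le_sum) auto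
    have b2: "(\<Sum>j\<in>UNIV. nf i j) \<le> (\<Sum>i\<in>UNIV. \<Sum>j\<in>UNIV. nf i j)"
      by (rule member_le_sum[where f = "\<lambda>i. \<Sum>j\<in>UNIV. nf i j"]) auto
    have ge: "n - nf i j \<ge> Nf i" using a b1 b2 n unfolding N_def by linarith
    have eq: "(n - nf i j) + nf i j = n" using a b1 b2 n unfolding N_def by linarith
    have "0 < matpow P (n - nf i j) i i * matpow P (nf i j) i j"
      using Nf[OF ge] nf by simp
    also have "\<dots> \<le> matpow P n i j" using matpow_pos_path[OF s, of "n - nf i j" i i "nf i j" j] eq by simp
    finally show ?thesis .
  qed
  then show ?thesis by blast
qed




lemma mixing:
  fixes P :: "'e::finite \<Rightarrow> 'e \<Rightarrow> real"
  assumes s: "stochastic P" and irr: "irreducible_mat P" and aper: "aperiodic_mat P"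
    and inv: "invariant_prob P \<mu>"
  shows "\<exists>C \<theta>. 0 \<le> C \<and> 0 < \<theta> \<and> \<theta> < 1 \<and> (\<forall>n i j. \<bar>matpow P n i j - \<mu> j\<bar> \<le> C * \<theta> ^ n)"
proof -
  obtain N where posN: "\<And>n i j. n \<ge> N \<Longrightarrow> 0 < matpow P n i j"
    using eventually_positive[OF s irr aper] by blast
  define N0 where "N0 = Suc N"
  have N0pos: "0 < N0" unfolding N0_def by simp
  define \<delta> where "\<delta> = Min (range (\<lambda>(i,j). matpow P N0 i j))"
  have "\<delta> \<in> range (\<lambda>(i,j). matpow P N0 i j)" unfolding \<delta>_def by (rule Min_in) auto
  then have \<delta>pos: "0 < \<delta>" using posN[of N0] unfolding N0_def by auto
  have \<delta>le: "\<delta> \<le> matpow P N0 i j" for i j unfolding \<delta>_def by (rule Min_le) auto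
  define \<rho> where "\<rho> = max (1 - real CARD('e) * \<delta>) (1/2)"
  have c1: "real CARD('e) \<ge> 1" by (simp add: Suc_le_eq)
  have \<rho>pos: "0 < \<rho>" and \<rho>1: "\<rho> < 1" unfolding \<rho>_def using \<delta>pos c1
    by (auto simp: max_def)
  have key: "\<bar>matpow P (q * N0 + r) i j - matpow P (q * N0 + r) i' j\<bar> \<le> \<rho> ^ q" for q r i i' j
  proof (induction q arbitrary: i i')
    case 0
    show ?case using matpow_nonneg[OF s] matpow_le1[OF s] by (simp add: abs_le_iff) (smt (verit) matpow_le1 matpow_nonneg s)
  next
    case (Suc q)
    have e: "Suc q * N0 + r = N0 + (q * N0 + r)" by simp
    have "\<bar>matpow P (Suc q * N0 + r) i j - matpow P (Suc q * N0 + r) i' j\<bar>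
        = \<bar>(\<Sum>k\<in>UNIV. matpow P N0 i k * matpow P (q * N0 + r) k j) - (\<Sum>k\<in>UNIV. matpow P N0 i' k * matpow P (q * N0 + r) k j)\<bar>"
      unfolding e matpow_add by simp
    also have "\<dots> \<le> (1 - real CARD('e) * \<delta>) * \<rho> ^ q"
      by (rule doeblin) (auto simp: matpow_rowsum[OF s] \<delta>le Suc.IH)
    also have "\<dots> \<le> \<rho> * \<rho> ^ q" unfolding \<rho>_def using \<rho>pos \<rho>_def by (intro mult_right_mono) auto
    finally show ?case by simp
  qed
  have key2: "\<bar>matpow P n i j - matpow P n i' j\<bar> \<le> \<rho> ^ (n div N0)" for n i i' j
    using key[of "n div N0" "n mod N0" i j i'] by simp
  have key3: "\<bar>matpow P n i j - \<mu> j\<bar> \<le> \<rho> ^ (n div N0)" for n i j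
  proof -
    have m1: "(\<Sum>k\<in>UNIV. \<mu> k) = 1" and m0: "\<And>k. 0 \<le> \<mu> k" using inv unfolding invariant_prob_def by auto
    have "matpow P n i j - \<mu> j = (\<Sum>k\<in>UNIV. \<mu> k * (matpow P n i j - matpow P n k j))"
      using matpow_inv[OF inv, of n j] m1
      by (simp add: algebra_simps sum_subtractf sum_distrib_right[symmetric])
    also have "\<bar>\<dots>\<bar> \<le> (\<Sum>k\<in>UNIV. \<mu> k * \<rho> ^ (n div N0))"
      by (rule order_trans[OF sum_abs sum_mono]) (auto simp: abs_mult m0 key2 intro: mult_left_mono)
    also have "\<dots> = \<rho> ^ (n div N0)" using m1 by (simp add: sum_distrib_right[symmetric])
    finally show ?thesis .
  qed
  define \<theta> where "\<theta> = root N0 \<rho>"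
  have \<theta>pos: "0 < \<theta>" unfolding \<theta>_def using N0pos \<rho>pos by (simp add: real_root_gt_zero)
  have \<theta>1: "\<theta> < 1" unfolding \<theta>_def using N0pos \<rho>1 by simp
  have \<theta>N: "\<theta> ^ N0 = \<rho>" unfolding \<theta>_def using N0pos \<rho>pos by simp
  have bnd: "\<rho> ^ (n div N0) \<le> (1 / \<rho>) * \<theta> ^ n" for n
  proof -
    have "\<rho> ^ (n div N0) * \<rho> = \<theta> ^ (N0 * (n div N0) + N0)"
      by (simp add: power_add power_mult \<theta>N)
    also have "\<dots> \<le> \<theta> ^ n"
    proof (rule power_decreasing)
      have "n = N0 * (n div N0) + n mod N0" by simp
      moreover have "n mod N0 < N0" using N0pos by simp
      ultimately show "n \<le> N0 * (n div N0) + N0" by linarith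
    qed (use \<theta>pos \<theta>1 in auto)
    finally show ?thesis using \<rho>pos by (simp add: field_simps)
  qed
  have "\<forall>n i j. \<bar>matpow P n i j - \<mu> j\<bar> \<le> (1 / \<rho>) * \<theta> ^ n"
    using key3 bnd order_trans by blast
  moreover have "0 \<le> 1 / \<rho>" using \<rho>pos by simp
  ultimately show ?thesis using \<theta>pos \<theta>1 by blast
qed




lemma Vset_eq: "Vset = range (\<lambda>l. axis l (1::real)) \<union> range (\<lambda>l. - axis l 1)"
  unfolding Vset_def by auto

lemma finite_Vset[simp]: "finite (Vset :: (real^'d) set)"
  unfolding Vset_eq by simp

lemma norm_Vset: "u \<in> Vset \<Longrightarrow> norm u = 1"
  unfolding Vset_eq by auto

lemma axis_ne_neg: "axis l (1::real) \<noteq> - axis l' 1"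
proof
  assume "axis l (1::real) = - axis l' 1"
  then have "axis l (1::real) $ l = (- axis l' 1) $ l" by simp
  then show False by (simp add: axis_def split: if_splits)
qed

lemma sum_Vset:
  fixes f :: "real^'d \<Rightarrow> 'b::comm_monoid_add"
  shows "(\<Sum>u\<in>Vset. f u) = (\<Sum>l\<in>UNIV. f (axis l 1)) + (\<Sum>l\<in>UNIV. f (- axis l 1))"
proof -
  have inj1: "inj (\<lambda>l. axis l (1::real) :: real^'d)" by (auto intro!: injI simp: axis_eq_axis)
  have inj2: "inj (\<lambda>l. - axis l (1::real) :: real^'d)" by (auto intro!: injI simp: axis_eq_axis)
  have disj: "range (\<lambda>l. axis l (1::real) :: real^'d) \<inter> range (\<lambda>l. - axis l 1) = {}"
    using axis_ne_neg by auto
  have "(\<Sum>u\<in>Vset. f u) = (\<Sum>u\<in>range (\<lambda>l. axis l (1::real)). f u) + (\<Sum>u\<in>range (\<lambda>l. - axis l 1). f u)"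
    unfolding Vset_eq by (rule sum.union_disjoint) (use disj in auto)
  also have "\<dots> = (\<Sum>l\<in>UNIV. f (axis l 1)) + (\<Sum>l\<in>UNIV. f (- axis l 1))"
    by (simp add: sum.reindex[OF inj1] sum.reindex[OF inj2])
  finally show ?thesis .
qed

lemma qref_pos_axis:
  "qref p k y (axis l 1) = (if y $ l = 1 then 0 else if y $ l = 0 then p k y (axis l 1) + p k y (- axis l 1) else p k y (axis l 1))"
proof -
  have "qref p k y (axis l 1) = (\<Sum>l'\<in>UNIV. if l' = l then (if y $ l = 1 then 0 else if y $ l = 0 then p k y (axis l 1) + p k y (- axis l 1) else p k y (axis l 1)) else 0)"
    unfolding qref_def by (intro sum.cong) (auto simp: axis_eq_axis axis_ne_neg)
  then show ?thesis by simp
qed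

lemma qref_neg_axis:
  "qref p k y (- axis l 1) = (if y $ l = 0 then 0 else if y $ l = 1 then p k y (axis l 1) + p k y (- axis l 1) else p k y (- axis l 1))"
proof -
  have "qref p k y (- axis l 1) = (\<Sum>l'\<in>UNIV. if l' = l then (if y $ l = 0 then 0 else if y $ l = 1 then p k y (axis l 1) + p k y (- axis l 1) else p k y (- axis l 1)) else 0)"
    unfolding qref_def by (intro sum.cong) (auto simp: axis_eq_axis axis_ne_neg[symmetric] axis_ne_neg)
  then show ?thesis by simp
qed

lemma qref_nonneg:
  assumes "\<And>k y u. u \<in> Vset \<Longrightarrow> 0 \<le> p k y u" and "u \<in> Vset"
  shows "0 \<le> qref p k y u"
proof -
  have a: "0 \<le> p k y (axis l 1)" "0 \<le> p k y (- axis l 1)" for l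
    by (rule assms(1), unfold Vset_eq, blast)+
  from assms(2) show ?thesis unfolding Vset_eq
    using a by (auto simp: qref_pos_axis qref_neg_axis)
qed

lemma qref_sum:
  assumes "\<And>k y. (\<Sum>u\<in>Vset. p k y u) = 1"
  shows "(\<Sum>u\<in>Vset. qref p k y u) = 1"
proof -
  have "(\<Sum>u\<in>Vset. qref p k y u) = (\<Sum>l\<in>UNIV. qref p k y (axis l 1) + qref p k y (- axis l 1))"
    by (simp add: sum_Vset sum.distrib)
  also have "\<dots> = (\<Sum>l\<in>UNIV. p k y (axis l 1) + p k y (- axis l 1))"
    by (intro sum.cong) (auto simp: qref_pos_axis qref_neg_axis)
  also have "\<dots> = (\<Sum>u\<in>Vset. p k y u)" by (simp add: sum_Vset sum.distrib)
  finally show ?thesis using assms by simp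
qed

lemma lip_of_C2:
  fixes f :: "real^'d \<Rightarrow> real"
  assumes "C2_bounded f"
  shows "\<exists>L\<ge>0. \<forall>y y'. \<bar>f y - f y'\<bar> \<le> L * norm (y - y')"
proof -
  obtain G H where d: "\<And>y. (f has_derivative (\<lambda>z. G y \<bullet> z)) (at y)" and bG: "bounded (range G)"
    using assms unfolding C2_bounded_def by blast
  obtain B where B: "\<And>y. norm (G y) \<le> B" using bG unfolding bounded_iff by blast
  have B0: "0 \<le> B" using B[of 0] norm_ge_zero order_trans by blast
  have "\<bar>f y - f y'\<bar> \<le> B * norm (y - y')" for y y'
  proof -
    have "norm (f y - f y') \<le> B * norm (y - y')"
    proof (rule differentiable_bound[of UNIV f "\<lambda>y z. G y \<bullet> z"])
      show "\<And>x. x \<in> UNIV \<Longrightarrow> (f has_derivative (\<lambda>z. G x \<bullet> z)) (at x within UNIV)" using d by simp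
      show "onorm (\<lambda>z. G x \<bullet> z) \<le> B" if "x \<in> UNIV" for x
      proof (rule onorm_le)
        fix z
        have "norm (G x \<bullet> z) \<le> norm (G x) * norm z" using Cauchy_Schwarz_ineq2 by simp
        also have "\<dots> \<le> B * norm z" using B by (simp add: mult_right_mono)
        finally show "norm (G x \<bullet> z) \<le> B * norm z" .
      qed
    qed auto
    then show ?thesis by simp
  qed
  then show ?thesis using B0 by blast
qed

lemma lip_p:
  fixes p :: "'e::finite \<Rightarrow> real^'d \<Rightarrow> real^'d \<Rightarrow> real"
  assumes "\<And>k u. u \<in> Vset \<Longrightarrow> C2_bounded (\<lambda>y. p k y u)"
  shows "\<exists>L\<ge>0. \<forall>k u y y'. u \<in> Vset \<longrightarrow> \<bar>p k y u - p k y' u\<bar> \<le> L * norm (y - y')"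
proof -
  have "\<forall>ku. \<exists>L. snd ku \<in> Vset \<longrightarrow> (L \<ge> 0 \<and> (\<forall>y y'. \<bar>p (fst ku) y (snd ku) - p (fst ku) y' (snd ku)\<bar> \<le> L * norm (y - y')))"
    using lip_of_C2[OF assms] by blast
  from choice[OF this] obtain Lf where Lf: "\<And>k u. u \<in> Vset \<Longrightarrow> Lf (k, u) \<ge> 0 \<and> (\<forall>y y'. \<bar>p k y u - p k y' u\<bar> \<le> Lf (k, u) * norm (y - y'))"
    by (metis fst_conv snd_conv)
  define L where "L = (\<Sum>ku\<in>UNIV \<times> Vset. Lf ku)"
  have LL: "Lf (k, u) \<le> L" if "u \<in> Vset" for k u
    unfolding L_def by (rule member_le_sum) (use that Lf in auto)
  have "L \<ge> 0" unfolding L_def using Lf by (intro sum_nonneg) auto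
  moreover have "\<bar>p k y u - p k y' u\<bar> \<le> L * norm (y - y')" if "u \<in> Vset" for k u y y'
    using Lf[OF that] LL[OF that] by (meson mult_right_mono norm_ge_zero order_trans)
  ultimately show ?thesis by blast
qed




locale setting =
  fixes P :: "'e::finite \<Rightarrow> 'e \<Rightarrow> real"
    and \<mu> :: "'e \<Rightarrow> real"
    and p :: "'e \<Rightarrow> real^'d \<Rightarrow> real^'d \<Rightarrow> real"
  assumes stoch: "stochastic P"
    and irr: "irreducible_mat P"
    and aper: "aperiodic_mat P"
    and inv: "invariant_prob P \<mu>"
    and p_nonneg: "\<And>k y u. u \<in> Vset \<Longrightarrow> 0 \<le> p k y u"
    and p_sum: "\<And>k y. (\<Sum>u\<in>Vset. p k y u) = 1"
    and p_C2: "\<And>k u. u \<in> Vset \<Longrightarrow> C2_bounded (\<lambda>y. p k y u)"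
    and centered: "\<And>y. (\<Sum>k\<in>UNIV. \<mu> k *\<^sub>R gdrift p k y) = 0"
begin

definition ww :: "nat \<Rightarrow> 'e \<Rightarrow> real^'d \<Rightarrow> real^'d" where
  "ww n i y = (\<Sum>j\<in>UNIV. matpow P n i j *\<^sub>R gdrift p j y)"

lemma g_bound: "norm (gdrift p k y) \<le> 1"
proof -
  have "norm (gdrift p k y) \<le> (\<Sum>u\<in>Vset. norm (p k y u *\<^sub>R u))"
    unfolding gdrift_def by (rule norm_sum)
  also have "\<dots> = (\<Sum>u\<in>Vset. p k y u)"
    by (intro sum.cong) (auto simp: norm_Vset p_nonneg)
  finally show ?thesis using p_sum by simp
qed

lemma g_lip: "\<exists>L\<ge>0. \<forall>k y y'. norm (gdrift p k y - gdrift p k y') \<le> L * norm (y - y')"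
proof -
  obtain L where L0: "L \<ge> 0" and L: "\<And>k u y y'. u \<in> Vset \<Longrightarrow> \<bar>p k y u - p k y' u\<bar> \<le> L * norm (y - y')"
  proof -
    have "\<exists>L\<ge>0. \<forall>k u y y'. u \<in> Vset \<longrightarrow> \<bar>p k y u - p k y' u\<bar> \<le> L * norm (y - y')"
      by (rule lip_p) (rule p_C2)
    then show ?thesis using that by blast
  qed
  have "norm (gdrift p k y - gdrift p k y') \<le> (real (card (Vset :: (real^'d) set)) * L) * norm (y - y')" for k y y'
  proof -
    have "gdrift p k y - gdrift p k y' = (\<Sum>u\<in>Vset. (p k y u - p k y' u) *\<^sub>R u)"
      unfolding gdrift_def by (simp add: sum_subtractf scaleR_diff_left)
    also have "norm \<dots> \<le> (\<Sum>u\<in>Vset. norm ((p k y u - p k y' u) *\<^sub>R u))" by (rule norm_sum)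
    also have "\<dots> \<le> (\<Sum>u\<in>(Vset :: (real^'d) set). L * norm (y - y'))"
      by (intro sum_mono) (auto simp: norm_Vset L)
    finally show ?thesis by simp
  qed
  then show ?thesis using L0 by (intro exI[of _ "real (card (Vset :: (real^'d) set)) * L"]) auto
qed

lemma ww_alt: "ww n i y = (\<Sum>j\<in>UNIV. (matpow P n i j - \<mu> j) *\<^sub>R gdrift p j y)"
  unfolding ww_def by (simp add: scaleR_diff_left sum_subtractf centered)

lemma ww_0: "ww 0 i y = gdrift p i y"
proof -
  have "ww 0 i y = (\<Sum>j\<in>UNIV. if j = i then gdrift p j y else 0)"
    unfolding ww_def by (intro sum.cong) auto
  then show ?thesis by simp
qed

lemma ww_Suc: "(\<Sum>k\<in>UNIV. P i k *\<^sub>R ww n k y) = ww (Suc n) i y"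
proof -
  have "(\<Sum>k\<in>UNIV. P i k *\<^sub>R ww n k y) = (\<Sum>k\<in>UNIV. \<Sum>j\<in>UNIV. (P i k * matpow P n k j) *\<^sub>R gdrift p j y)"
    unfolding ww_def by (simp add: scaleR_sum_right)
  also have "\<dots> = (\<Sum>j\<in>UNIV. \<Sum>k\<in>UNIV. (P i k * matpow P n k j) *\<^sub>R gdrift p j y)"
    by (rule sum.swap)
  also have "\<dots> = ww (Suc n) i y"
    unfolding ww_def matpow_Suc' by (simp add: scaleR_sum_left)
  finally show ?thesis .
qed

lemma mix: obtains C \<theta> where "0 \<le> C" "0 < \<theta>" "\<theta> < 1" "\<And>n i j. \<bar>matpow P n i j - \<mu> j\<bar> \<le> C * \<theta> ^ n"
  using mixing[OF stoch irr aper inv] by blast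

lemma ww_bounds:
  obtains K \<theta> where "0 \<le> K" "0 < \<theta>" "\<theta> < 1"
    "\<And>n i y. norm (ww n i y) \<le> K * \<theta> ^ n"
    "\<And>n i y y'. norm (ww n i y - ww n i y') \<le> K * \<theta> ^ n * norm (y - y')"
proof -
  obtain C \<theta> where C0: "0 \<le> C" and t: "0 < \<theta>" "\<theta> < 1" and C: "\<And>n i j. \<bar>matpow P n i j - \<mu> j\<bar> \<le> C * \<theta> ^ n"
    by (rule mix) blast
  obtain Lg where Lg0: "Lg \<ge> 0" and Lg: "\<And>k y y'. norm (gdrift p k y - gdrift p k y') \<le> Lg * norm (y - y')"
    using g_lip by blast
  define K where "K = real CARD('e) * C * (1 + Lg)"
  have K0: "0 \<le> K" unfolding K_def using C0 Lg0 by simp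
  have b1: "norm (ww n i y) \<le> K * \<theta> ^ n" for n i y
  proof -
    have "norm (ww n i y) \<le> (\<Sum>j\<in>UNIV. norm ((matpow P n i j - \<mu> j) *\<^sub>R gdrift p j y))"
      unfolding ww_alt by (rule norm_sum)
    also have "\<dots> \<le> (\<Sum>j\<in>(UNIV::'e set). C * \<theta> ^ n * 1)"
      by (intro sum_mono) (use mult_mono[OF C g_bound] C0 t in simp)
    also have "\<dots> \<le> K * \<theta> ^ n" unfolding K_def using C0 Lg0 t
      by (simp add: algebra_simps mult_left_mono)
    finally show ?thesis .
  qed
  have b2: "norm (ww n i y - ww n i y') \<le> K * \<theta> ^ n * norm (y - y')" for n i y y'
  proof -
    have "ww n i y - ww n i y' = (\<Sum>j\<in>UNIV. (matpow P n i j - \<mu> j) *\<^sub>R (gdrift p j y - gdrift p j y'))"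
      unfolding ww_alt by (simp add: sum_subtractf scaleR_diff_right)
    also have "norm \<dots> \<le> (\<Sum>j\<in>UNIV. norm ((matpow P n i j - \<mu> j) *\<^sub>R (gdrift p j y - gdrift p j y')))"
      by (rule norm_sum)
    also have "\<dots> \<le> (\<Sum>j\<in>(UNIV::'e set). C * \<theta> ^ n * (Lg * norm (y - y')))"
      by (intro sum_mono) (use mult_mono[OF C Lg] C0 t in simp)
    also have "\<dots> \<le> K * \<theta> ^ n * norm (y - y')" unfolding K_def using C0 Lg0 t
      by (simp add: algebra_simps mult_left_mono mult_right_mono)
    finally show ?thesis .
  qed
  show ?thesis using K0 t b1 b2 by (rule that)
qed

lemma v_props:
  obtains Kv Lv where "0 \<le> Kv" "0 \<le> Lv"
    "\<And>i y. (\<lambda>n. ww n i y) sums vfun P p i y"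
    "\<And>i y. norm (vfun P p i y) \<le> Kv"
    "\<And>i y y'. norm (vfun P p i y - vfun P p i y') \<le> Lv * norm (y - y')"
proof -
  obtain K \<theta> where K0: "0 \<le> K" and t: "0 < \<theta>" "\<theta> < 1"
    and b1: "\<And>n i y. norm (ww n i y) \<le> K * \<theta> ^ n"
    and b2: "\<And>n i y y'. norm (ww n i y - ww n i y') \<le> K * \<theta> ^ n * norm (y - y')"
    by (rule ww_bounds) blast
  have sg: "summable (\<lambda>n. K * \<theta> ^ n)" using t by (intro summable_mult summable_geometric) simp
  have sw: "summable (\<lambda>n. ww n i y)" for i y
    by (rule summable_comparison_test[OF _ sg]) (use b1 in blast)
  have vs: "(\<lambda>n. ww n i y) sums vfun P p i y" for i y
    unfolding vfun_def ww_def[symmetric] using sw by (simp add: summable_sums)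
  define Kv where "Kv = (\<Sum>n. K * \<theta> ^ n)"
  have Kv0: "0 \<le> Kv" unfolding Kv_def using K0 t by (intro suminf_nonneg sg) simp
  have vb: "norm (vfun P p i y) \<le> Kv" for i y
    unfolding sums_unique[OF vs] Kv_def by (rule norm_suminf_le[OF b1 sg])
  have vl: "norm (vfun P p i y - vfun P p i y') \<le> Kv * norm (y - y')" for i y y'
  proof -
    have "vfun P p i y - vfun P p i y' = (\<Sum>n. ww n i y - ww n i y')"
      unfolding sums_unique[OF vs] by (rule suminf_diff[OF sw sw])
    also have "norm \<dots> \<le> (\<Sum>n. K * \<theta> ^ n * norm (y - y'))"
      by (rule norm_suminf_le[OF b2]) (intro summable_mult2 sg)
    also have "\<dots> = Kv * norm (y - y')" unfolding Kv_def by (rule suminf_mult2[symmetric, OF sg])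
    finally show ?thesis .
  qed
  show ?thesis using Kv0 Kv0 vs vb vl by (rule that)
qed

lemma poisson: "(\<Sum>k\<in>UNIV. P i k *\<^sub>R vfun P p k z) = vfun P p i z - gdrift p i z"
proof -
  obtain Kv Lv where vs: "\<And>i y. (\<lambda>n. ww n i y) sums vfun P p i y" by (rule v_props) blast
  have "(\<lambda>n. \<Sum>k\<in>UNIV. P i k *\<^sub>R ww n k z) sums (\<Sum>k\<in>UNIV. P i k *\<^sub>R vfun P p k z)"
    by (intro sums_sum sums_scaleR_right vs)
  then have "(\<lambda>n. ww (Suc n) i z) sums (\<Sum>k\<in>UNIV. P i k *\<^sub>R vfun P p k z)" by (simp add: ww_Suc)
  then have "(\<lambda>n. ww n i z) sums ((\<Sum>k\<in>UNIV. P i k *\<^sub>R vfun P p k z) + gdrift p i z)"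
    using sums_Suc_iff[of "\<lambda>n. ww n i z"] by (simp add: ww_0)
  from sums_unique2[OF this vs] show ?thesis by (simp add: algebra_simps)
qed

end



context setting begin

lemma qnn: "u \<in> Vset \<Longrightarrow> 0 \<le> qref p k y u"
  by (rule qref_nonneg[OF p_nonneg])

lemma qsum: "(\<Sum>u\<in>Vset. qref p k y u) = 1"
  by (rule qref_sum[OF p_sum])

lemma h_bound: "norm (hdrift p k y) \<le> 1"
proof -
  have "norm (hdrift p k y) \<le> (\<Sum>u\<in>Vset. norm (qref p k y u *\<^sub>R u))"
    unfolding hdrift_def by (rule norm_sum)
  also have "\<dots> = (\<Sum>u\<in>Vset. qref p k y u)"
    by (intro sum.cong) (auto simp: norm_Vset qnn)
  finally show ?thesis using qsum by simp
qed

lemma cm_bound: "\<exists>C\<ge>0. \<forall>m::nat. m \<ge> 1 \<longrightarrow> (\<forall>i y. norm (cm P p m i y) \<le> C / real m)"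
proof -
  obtain Kv Lv where Lv0: "0 \<le> Lv" and vl: "\<And>i y y'. norm (vfun P p i y - vfun P p i y') \<le> Lv * norm (y - y')"
    by (rule v_props) blast
  obtain Lg where Lg0: "Lg \<ge> 0" and Lg: "\<And>k y y'. norm (gdrift p k y - gdrift p k y') \<le> Lg * norm (y - y')"
    using g_lip by blast
  have "norm (cm P p m i y) \<le> (Lv + Lg) / real m" if m: "m \<ge> 1" for m i y
  proof -
    have Fl: "norm ((vfun P p i (y + (1 / real m) *\<^sub>R u) - gdrift p i (y + (1 / real m) *\<^sub>R u)) - (vfun P p i y - gdrift p i y))
        \<le> (Lv + Lg) / real m" if u: "u \<in> Vset" for u
    proof -
      have nu: "norm ((1 / real m) *\<^sub>R u) = 1 / real m" using norm_Vset[OF u] m by simp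
      have "norm ((vfun P p i (y + (1 / real m) *\<^sub>R u) - gdrift p i (y + (1 / real m) *\<^sub>R u)) - (vfun P p i y - gdrift p i y))
          \<le> norm (vfun P p i (y + (1 / real m) *\<^sub>R u) - vfun P p i y) + norm (gdrift p i (y + (1 / real m) *\<^sub>R u) - gdrift p i y)"
        by (rule order_trans[OF _ norm_triangle_ineq4]) (simp add: algebra_simps)
      also have "\<dots> \<le> Lv * norm ((1 / real m) *\<^sub>R u) + Lg * norm ((1 / real m) *\<^sub>R u)"
        using vl[of i "y + (1 / real m) *\<^sub>R u" y] Lg[of i "y + (1 / real m) *\<^sub>R u" y] by simp
      also have "\<dots> = (Lv + Lg) / real m" unfolding nu by (simp add: add_divide_distrib)
      finally show ?thesis .
    qed
    have "norm (cm P p m i y) \<le> (\<Sum>u\<in>Vset. norm (qref p i y u *\<^sub>R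
      ((vfun P p i (y + (1 / real m) *\<^sub>R u) - gdrift p i (y + (1 / real m) *\<^sub>R u)) - (vfun P p i y - gdrift p i y))))"
      unfolding cm_def by (rule norm_sum)
    also have "\<dots> \<le> (\<Sum>u\<in>Vset. qref p i y u * ((Lv + Lg) / real m))"
    proof (intro sum_mono)
      fix u :: "real^'d" assume u: "u \<in> Vset"
      show "norm (qref p i y u *\<^sub>R
      ((vfun P p i (y + (1 / real m) *\<^sub>R u) - gdrift p i (y + (1 / real m) *\<^sub>R u)) - (vfun P p i y - gdrift p i y)))
        \<le> qref p i y u * ((Lv + Lg) / real m)"
        using mult_left_mono[OF Fl[OF u] qnn[OF u]] qnn[OF u] by simp
    qed
    also have "\<dots> = (\<Sum>u\<in>Vset. qref p i y u) * ((Lv + Lg) / real m)" by (rule sum_distrib_right[symmetric])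
    also have "\<dots> = (Lv + Lg) / real m" using qsum by simp
    finally show ?thesis .
  qed
  then show ?thesis using Lv0 Lg0 by (intro exI[of _ "Lv + Lg"]) auto
qed

lemma identity:
  "(\<Sum>k\<in>UNIV. \<Sum>u\<in>Vset. (P x k * qref p x ((1 / real m) *\<^sub>R y) u) *\<^sub>R Zinc P p m x y k (y + u)) = 0"
proof -
  define z where "z = (1 / real m) *\<^sub>R y"
  define a where "a = vfun P p x z + (hdrift p x z - gdrift p x z) + cm P p m x z"
  define G where "G w = vfun P p x w - gdrift p x w" for w
  have Pr: "(\<Sum>k\<in>UNIV. P x k) = 1" using stoch unfolding stochastic_def by blast
  have e1: "Zinc P p m x y k (y + u) = u + vfun P p k (z + (1 / real m) *\<^sub>R u) - a" for k u
    unfolding Zinc_def a_def z_def by (simp add: scaleR_right_distrib algebra_simps)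
  have e2: "(\<Sum>k\<in>UNIV. P x k *\<^sub>R (u + vfun P p k w - a)) = u + G w - a" for u w
  proof -
    have "(\<Sum>k\<in>UNIV. P x k *\<^sub>R (u + vfun P p k w - a)) = (\<Sum>k\<in>UNIV. P x k) *\<^sub>R u + (\<Sum>k\<in>UNIV. P x k *\<^sub>R vfun P p k w) - (\<Sum>k\<in>UNIV. P x k) *\<^sub>R a"
      by (simp add: scaleR_sum_left sum.distrib sum_subtractf algebra_simps)
    then show ?thesis using Pr by (simp add: poisson G_def)
  qed
  have ecm: "cm P p m x z = (\<Sum>u\<in>Vset. qref p x z u *\<^sub>R G (z + (1 / real m) *\<^sub>R u)) - G z"
  proof -
    have "cm P p m x z = (\<Sum>u\<in>Vset. qref p x z u *\<^sub>R G (z + (1 / real m) *\<^sub>R u)) - (\<Sum>u\<in>Vset. qref p x z u) *\<^sub>R G z"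
      unfolding cm_def G_def by (simp add: scaleR_sum_left sum_subtractf scaleR_diff_right)
    then show ?thesis using qsum by simp
  qed
  have "(\<Sum>k\<in>UNIV. \<Sum>u\<in>Vset. (P x k * qref p x z u) *\<^sub>R Zinc P p m x y k (y + u))
      = (\<Sum>u\<in>Vset. \<Sum>k\<in>UNIV. qref p x z u *\<^sub>R (P x k *\<^sub>R (u + vfun P p k (z + (1 / real m) *\<^sub>R u) - a)))"
    by (subst sum.swap) (simp add: e1 mult.commute)
  also have "\<dots> = (\<Sum>u\<in>Vset. qref p x z u *\<^sub>R (\<Sum>k\<in>UNIV. P x k *\<^sub>R (u + vfun P p k (z + (1 / real m) *\<^sub>R u) - a)))"
    by (simp add: scaleR_sum_right)
  also have "\<dots> = (\<Sum>u\<in>Vset. qref p x z u *\<^sub>R (u + G (z + (1 / real m) *\<^sub>R u) - a))"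
    by (simp only: e2)
  also have "\<dots> = hdrift p x z + (\<Sum>u\<in>Vset. qref p x z u *\<^sub>R G (z + (1 / real m) *\<^sub>R u)) - (\<Sum>u\<in>Vset. qref p x z u) *\<^sub>R a"
    unfolding hdrift_def by (simp add: scaleR_sum_left sum.distrib sum_subtractf algebra_simps)
  also have "\<dots> = 0" using qsum by (simp add: a_def ecm G_def)
  finally show ?thesis unfolding z_def .
qed

end



lemma natfilt_space[simp]: "space (natfilt M \<xi> R n) = space M"
  unfolding natfilt_def by (simp add: space_measure_of_conv)

lemma natfilt_sets: "sets (natfilt M \<xi> R n) = sigma_sets (space M)
     ((\<Union>i\<in>{..n}. {\<xi> i -` A \<inter> space M | A. True}) \<union> (\<Union>i\<in>{..n}. {R i -` A \<inter> space M | A. True}))"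
  unfolding natfilt_def by (rule sets_measure_of) auto

lemma natfilt_subalg:
  assumes "\<And>i. \<xi> i \<in> M \<rightarrow>\<^sub>M count_space UNIV" "\<And>i. R i \<in> M \<rightarrow>\<^sub>M count_space UNIV"
  shows "subalgebra M (natfilt M \<xi> R n)"
  unfolding subalgebra_def
proof
  show "sets (natfilt M \<xi> R n) \<subseteq> sets M"
    unfolding natfilt_sets
    by (rule sets.sigma_sets_subset) (auto intro: measurable_sets[OF assms(1)] measurable_sets[OF assms(2)])
qed simp

lemma natfilt_meas:
  shows "\<xi> n \<in> natfilt M \<xi> R n \<rightarrow>\<^sub>M count_space UNIV" "R n \<in> natfilt M \<xi> R n \<rightarrow>\<^sub>M count_space UNIV"
proof -
  show "\<xi> n \<in> natfilt M \<xi> R n \<rightarrow>\<^sub>M count_space UNIV"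
  proof (rule measurableI)
    fix A
    show "\<xi> n -` A \<inter> space (natfilt M \<xi> R n) \<in> sets (natfilt M \<xi> R n)"
      unfolding natfilt_sets natfilt_space by (rule sigma_sets.Basic) blast
  qed simp
  show "R n \<in> natfilt M \<xi> R n \<rightarrow>\<^sub>M count_space UNIV"
  proof (rule measurableI)
    fix A
    show "R n -` A \<inter> space (natfilt M \<xi> R n) \<in> sets (natfilt M \<xi> R n)"
      unfolding natfilt_sets natfilt_space by (rule sigma_sets.Basic) blast
  qed simp
qed

lemma pair_meas:
  fixes X :: "'a \<Rightarrow> 'e::finite"
  assumes X: "X \<in> N \<rightarrow>\<^sub>M count_space UNIV" and Y: "Y \<in> N \<rightarrow>\<^sub>M count_space UNIV"
  shows "(\<lambda>\<omega>. f (X \<omega>) (Y \<omega>)) \<in> borel_measurable N"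
proof -
  have "(\<lambda>\<omega>. (X \<omega>, Y \<omega>)) \<in> N \<rightarrow>\<^sub>M count_space UNIV"
  proof (rule measurableI)
    fix S :: "('e \<times> 'b) set"
    have "(\<lambda>\<omega>. (X \<omega>, Y \<omega>)) -` S \<inter> space N = (\<Union>k\<in>UNIV. (X -` {k} \<inter> space N) \<inter> (Y -` {y. (k, y) \<in> S} \<inter> space N))"
      by auto
    also have "\<dots> \<in> sets N"
      by (intro sets.finite_UN sets.Int measurable_sets[OF X] measurable_sets[OF Y]) auto
    finally show "(\<lambda>\<omega>. (X \<omega>, Y \<omega>)) -` S \<inter> space N \<in> sets N" .
  qed simp
  moreover have "(\<lambda>(a, b). f a b) \<in> count_space UNIV \<rightarrow>\<^sub>M borel" by simp
  ultimately have "(\<lambda>(a, b). f a b) \<circ> (\<lambda>\<omega>. (X \<omega>, Y \<omega>)) \<in> borel_measurable N"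
    by (rule measurable_comp)
  then show ?thesis by (simp add: comp_def)
qed

lemma count_to_borel:
  assumes "Y \<in> N \<rightarrow>\<^sub>M count_space UNIV"
  shows "Y \<in> borel_measurable N"
proof -
  have "(\<lambda>x. x) \<in> count_space UNIV \<rightarrow>\<^sub>M (borel :: 'b::topological_space measure)" by simp
  from measurable_comp[OF assms this] show ?thesis by (simp add: comp_def)
qed




context setting begin

lemma P_le1: "P i k \<le> 1"
proof -
  have "P i k \<le> (\<Sum>j\<in>UNIV. P i j)" by (rule member_le_sum) (use stoch in \<open>auto simp: stochastic_def\<close>)
  then show ?thesis using stoch by (simp add: stochastic_def)
qed

lemma P_nn: "0 \<le> P i k" using stoch by (simp add: stochastic_def)

lemma q_le1: "u \<in> Vset \<Longrightarrow> qref p k y u \<le> 1"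
proof -
  assume u: "u \<in> Vset"
  have "qref p k y u \<le> (\<Sum>u\<in>Vset. qref p k y u)" by (rule member_le_sum) (use u qnn in auto)
  then show ?thesis using qsum by simp
qed

lemma Zinc_bound: "m \<ge> 1 \<Longrightarrow> \<exists>B. \<forall>x y k u. norm (Zinc P p m x y k (y + u)) \<le> norm u + B"
proof -
  assume m: "m \<ge> 1"
  obtain Kv Lv where vb: "\<And>i y. norm (vfun P p i y) \<le> Kv" by (rule v_props) blast
  obtain C where C: "\<And>i y. norm (cm P p m i y) \<le> C / real m" and C0: "C \<ge> 0" using cm_bound m by blast
  have Cm: "C / real m \<le> C" using m C0 by (simp add: divide_le_eq mult_le_cancel_left1)
  have "norm (Zinc P p m x y k (y + u)) \<le> norm u + (Kv + Kv + 1 + 1 + C)" for x y k u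
  proof -
    define z where "z = (1 / real m) *\<^sub>R y"
    have e: "Zinc P p m x y k (y + u) = u + vfun P p k (z + (1 / real m) *\<^sub>R u) - vfun P p x z - hdrift p x z + gdrift p x z - cm P p m x z"
      unfolding Zinc_def z_def by (simp add: scaleR_right_distrib algebra_simps)
    have "norm (Zinc P p m x y k (y + u)) \<le> norm u + norm (vfun P p k (z + (1 / real m) *\<^sub>R u)) + norm (vfun P p x z) + norm (hdrift p x z) + norm (gdrift p x z) + norm (cm P p m x z)"
      unfolding e by (intro order_trans[OF norm_triangle_ineq4] order_trans[OF norm_triangle_ineq] add_mono order_refl)
    also have "\<dots> \<le> norm u + (Kv + Kv + 1 + 1 + C)"
      using vb[of k "z + (1 / real m) *\<^sub>R u"] vb[of x z] h_bound[of x z] g_bound[of x z] C[of x z] Cm by linarith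
    finally show ?thesis .
  qed
  then show ?thesis by blast
qed

end



context setting begin

lemma martingale:
  fixes M :: "'a measure" and \<xi> :: "nat \<Rightarrow> 'a \<Rightarrow> 'e" and R :: "nat \<Rightarrow> 'a \<Rightarrow> real^'d"
  assumes m: "m \<ge> 1" and rc: "reflected_chain P p m M \<xi> R"
  shows "AE \<omega> in M. real_cond_exp M (natfilt M \<xi> R n)
           (\<lambda>\<omega>. Zinc P p m (\<xi> n \<omega>) (R n \<omega>) (\<xi> (Suc n) \<omega>) (R (Suc n) \<omega>) $ l) \<omega> = 0"
proof -
  have ps: "prob_space M" and mxi: "\<And>i. \<xi> i \<in> M \<rightarrow>\<^sub>M count_space UNIV"
    and mR: "\<And>i. R i \<in> M \<rightarrow>\<^sub>M count_space UNIV"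
    using rc unfolding reflected_chain_def by blast+
  have hyp: "\<And>k u. u \<in> Vset \<Longrightarrow> AE \<omega> in M. real_cond_exp M (natfilt M \<xi> R n)
            (indicator {\<omega>\<in>space M. \<xi> (Suc n) \<omega> = k \<and> R (Suc n) \<omega> = R n \<omega> + u}) \<omega>
          = P (\<xi> n \<omega>) k * qref p (\<xi> n \<omega>) ((1 / real m) *\<^sub>R R n \<omega>) u"
    using rc unfolding reflected_chain_def by blast
  interpret prob_space M by (rule ps)
  define F where "F = natfilt M \<xi> R n"
  have sub: "subalgebra M F" unfolding F_def by (rule natfilt_subalg[OF mxi mR])
  have "finite_measure_subalgebra M F"
    by (intro finite_measure_subalgebra.intro finite_measure_axioms finite_measure_subalgebra_axioms.intro sub)
  then interpret sigma_finite_subalgebra M F by (rule finite_measure_subalgebra_is_sigma_finite)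
  define X where "X = \<xi> n"
  define Y where "Y = R n"
  define X' where "X' = \<xi> (Suc n)"
  define Y' where "Y' = R (Suc n)"
  have mXF: "X \<in> F \<rightarrow>\<^sub>M count_space UNIV" and mYF: "Y \<in> F \<rightarrow>\<^sub>M count_space UNIV"
    unfolding X_def Y_def F_def by (rule natfilt_meas)+
  have mX: "X \<in> M \<rightarrow>\<^sub>M count_space UNIV" and mY: "Y \<in> M \<rightarrow>\<^sub>M count_space UNIV"
    and mX': "X' \<in> M \<rightarrow>\<^sub>M count_space UNIV" and mY': "Y' \<in> M \<rightarrow>\<^sub>M count_space UNIV"
    unfolding X_def Y_def X'_def Y'_def by (rule mxi mR)+
  define A where "A ku = {\<omega>\<in>space M. X' \<omega> = fst ku \<and> Y' \<omega> = Y \<omega> + snd ku}" for ku :: "'e \<times> (real^'d)"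
  have A_sets: "A ku \<in> sets M" for ku
  proof -
    have bY: "Y \<in> borel_measurable M" "Y' \<in> borel_measurable M" using count_to_borel mY mY' by blast+
    have "(\<lambda>\<omega>. Y' \<omega> - Y \<omega>) \<in> borel_measurable M" using bY by (intro borel_measurable_diff) auto
    then have s2: "(\<lambda>\<omega>. Y' \<omega> - Y \<omega>) -` {snd ku} \<inter> space M \<in> sets M"
      by (rule measurable_sets) (simp add: borel_closed)
    have s1: "X' -` {fst ku} \<inter> space M \<in> sets M" by (rule measurable_sets[OF mX']) simp
    have "A ku = (X' -` {fst ku} \<inter> space M) \<inter> ((\<lambda>\<omega>. Y' \<omega> - Y \<omega>) -` {snd ku} \<inter> space M)"
      unfolding A_def by (auto simp: algebra_simps)
    then show ?thesis using s1 s2 by simp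
  qed
  define W where "W ku \<omega> = Zinc P p m (X \<omega>) (Y \<omega>) (fst ku) (Y \<omega> + snd ku) $ l" for ku \<omega>
  have W_F: "W ku \<in> borel_measurable F" for ku
    unfolding W_def by (rule pair_meas[OF mXF mYF])
  have W_M: "W ku \<in> borel_measurable M" for ku
    by (rule measurable_from_subalg[OF sub W_F])
  obtain B where Bd: "\<And>x y k u. norm (Zinc P p m x y k (y + u)) \<le> norm u + B"
    using Zinc_bound[OF m] by blast
  have W_bd: "\<bar>W ku \<omega>\<bar> \<le> norm (snd ku) + B" for ku \<omega>
    unfolding W_def by (rule order_trans[OF component_le_norm_cart Bd])
  define Q where "Q ku \<omega> = P (X \<omega>) (fst ku) * qref p (X \<omega>) ((1 / real m) *\<^sub>R Y \<omega>) (snd ku)" for ku \<omega>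
  define I where "I = (UNIV :: 'e set) \<times> (Vset :: (real^'d) set)"
  have finI: "finite I" unfolding I_def by simp
  have Q_M: "Q ku \<in> borel_measurable M" for ku
    unfolding Q_def by (rule pair_meas[OF mX mY])
  have Q_bd: "ku \<in> I \<Longrightarrow> \<bar>Q ku \<omega>\<bar> \<le> 1" for ku \<omega>
    unfolding Q_def I_def
    by (auto simp: abs_mult P_nn qnn intro!: mult_le_one P_le1 q_le1)
  have Q_int: "ku \<in> I \<Longrightarrow> integrable M (Q ku)" for ku
    by (rule integrable_const_bound[where B=1]) (use Q_bd Q_M in auto)
  have hypQ: "ku \<in> I \<Longrightarrow> AE \<omega> in M. real_cond_exp M F (indicator (A ku)) \<omega> = Q ku \<omega>" for ku
    using hyp[of "snd ku" "fst ku"] unfolding I_def A_def Q_def F_def X_def Y_def X'_def Y'_def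
    by (cases ku) auto
  have ind_int: "integrable M (indicator (A ku) :: 'a \<Rightarrow> real)" for ku
    using A_sets by (intro integrable_real_indicator) (auto simp: less_top[symmetric])
  have QI: "(\<Sum>ku\<in>I. Q ku \<omega>) = 1" for \<omega>
  proof -
    have "(\<Sum>ku\<in>I. Q ku \<omega>) = (\<Sum>k\<in>UNIV. \<Sum>u\<in>Vset. P (X \<omega>) k * qref p (X \<omega>) ((1 / real m) *\<^sub>R Y \<omega>) u)"
      unfolding I_def Q_def by (simp add: sum.cartesian_product split_def)
    also have "\<dots> = (\<Sum>k\<in>UNIV. P (X \<omega>) k)" by (simp add: sum_distrib_left[symmetric] qsum)
    also have "\<dots> = 1" using stoch by (simp add: stochastic_def)
    finally show ?thesis .
  qed
  have prob1: "prob (\<Union>ku\<in>I. A ku) = 1"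
  proof -
    have disj: "disjoint_family_on A I" unfolding disjoint_family_on_def A_def by auto
    have "prob (\<Union>ku\<in>I. A ku) = (\<Sum>ku\<in>I. prob (A ku))"
      by (rule measure_finite_Union[OF finI]) (use A_sets disj in \<open>auto simp: emeasure_finite\<close>)
    also have "\<dots> = (\<Sum>ku\<in>I. integral\<^sup>L M (Q ku))"
    proof (rule sum.cong[OF refl])
      fix ku assume ku: "ku \<in> I"
      have "prob (A ku) = integral\<^sup>L M (indicator (A ku))"
        using A_sets[of ku] by (simp add: Int_absorb2 sets.sets_into_space)
      also have "\<dots> = integral\<^sup>L M (real_cond_exp M F (indicator (A ku)))"
        by (rule real_cond_exp_int(2)[symmetric, OF ind_int])
      also have "\<dots> = integral\<^sup>L M (Q ku)"
        by (rule integral_cong_AE[OF _ Q_M hypQ[OF ku]])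
           (rule measurable_from_subalg[OF sub borel_measurable_cond_exp])
      finally show "prob (A ku) = integral\<^sup>L M (Q ku)" .
    qed
    also have "\<dots> = integral\<^sup>L M (\<lambda>\<omega>. \<Sum>ku\<in>I. Q ku \<omega>)"
      using Bochner_Integration.integral_sum[of I M Q] Q_int by simp
    also have "\<dots> = 1" by (simp add: QI prob_space)
    finally show ?thesis .
  qed
  have AEU: "AE \<omega> in M. \<omega> \<in> (\<Union>ku\<in>I. A ku)" by (rule AE_prob_1[OF prob1])
  define Zf where "Zf \<omega> = Zinc P p m (X \<omega>) (Y \<omega>) (X' \<omega>) (Y' \<omega>) $ l" for \<omega>
  define S where "S \<omega> = (\<Sum>ku\<in>I. W ku \<omega> * indicator (A ku) \<omega>)" for \<omega>
  have ZS: "AE \<omega> in M. Zf \<omega> = S \<omega>"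
    using AEU
  proof (rule AE_mp, intro AE_I2 impI)
    fix \<omega> assume "\<omega> \<in> (\<Union>ku\<in>I. A ku)"
    then obtain ku0 where ku0: "ku0 \<in> I" "\<omega> \<in> A ku0" by blast
    have uniq: "ku = ku0" if "\<omega> \<in> A ku" for ku
    proof -
      have "fst ku = fst ku0" "snd ku = snd ku0" using that ku0(2) unfolding A_def by auto
      then show ?thesis by (simp add: prod_eq_iff)
    qed
    have "S \<omega> = (\<Sum>ku\<in>I. if ku = ku0 then W ku0 \<omega> else 0)"
      unfolding S_def
    proof (intro sum.cong refl)
      fix ku assume "ku \<in> I"
      show "W ku \<omega> * indicator (A ku) \<omega> = (if ku = ku0 then W ku0 \<omega> else 0)"
      proof (cases "ku = ku0")
        case True
        then show ?thesis using ku0 by simp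
      next
        case False
        then have "\<omega> \<notin> A ku" using uniq by blast
        then show ?thesis using False by simp
      qed
    qed
    also have "\<dots> = W ku0 \<omega>" using ku0(1) finI by simp
    also have "\<dots> = Zf \<omega>" using ku0(2) unfolding W_def Zf_def A_def by auto
    finally show "Zf \<omega> = S \<omega>" by simp
  qed
  have Zf_M: "Zf \<in> borel_measurable M"
  proof -
    define f1 where "f1 a b = (b + vfun P p a ((1 / real m) *\<^sub>R b)) $ l" for a b
    define f2 where "f2 a b = (b + vfun P p a ((1 / real m) *\<^sub>R b)
          + (hdrift p a ((1 / real m) *\<^sub>R b) - gdrift p a ((1 / real m) *\<^sub>R b))
          + cm P p m a ((1 / real m) *\<^sub>R b)) $ l" for a b
    have "Zf = (\<lambda>\<omega>. f1 (X' \<omega>) (Y' \<omega>) - f2 (X \<omega>) (Y \<omega>))"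
      unfolding Zf_def f1_def f2_def Zinc_def by (simp add: fun_eq_iff)
    moreover have "(\<lambda>\<omega>. f1 (X' \<omega>) (Y' \<omega>) - f2 (X \<omega>) (Y \<omega>)) \<in> borel_measurable M"
      by (intro borel_measurable_diff pair_meas[OF mX' mY'] pair_meas[OF mX mY])
    ultimately show ?thesis by simp
  qed
  have S_M: "S \<in> borel_measurable M"
    unfolding S_def by (intro borel_measurable_sum borel_measurable_times W_M borel_measurable_indicator A_sets)
  have WA_int: "integrable M (\<lambda>\<omega>. W ku \<omega> * indicator (A ku) \<omega>)" for ku
  proof (rule integrable_const_bound[where B = "norm (snd ku) + B"])
    show "AE \<omega> in M. norm (W ku \<omega> * indicator (A ku) \<omega>) \<le> norm (snd ku) + B"
      using W_bd[of ku] by (intro AE_I2) (auto simp: indicator_def intro: order_trans[OF abs_ge_zero])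
    show "(\<lambda>\<omega>. W ku \<omega> * indicator (A ku) \<omega>) \<in> borel_measurable M"
      by (intro borel_measurable_times W_M borel_measurable_indicator A_sets)
  qed
  have step1: "AE \<omega> in M. real_cond_exp M F Zf \<omega> = real_cond_exp M F S \<omega>"
    by (rule real_cond_exp_cong[OF ZS Zf_M S_M])
  have step2: "AE \<omega> in M. real_cond_exp M F S \<omega> = (\<Sum>ku\<in>I. real_cond_exp M F (\<lambda>\<omega>. W ku \<omega> * indicator (A ku) \<omega>) \<omega>)"
    unfolding S_def by (rule real_cond_exp_sum) (rule WA_int)
  have step3: "AE \<omega> in M. \<forall>ku\<in>I. real_cond_exp M F (\<lambda>\<omega>. W ku \<omega> * indicator (A ku) \<omega>) \<omega> = W ku \<omega> * Q ku \<omega>"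
  proof (subst AE_ball_countable)
    show "countable I" using finI by (rule countable_finite)
    show "\<forall>ku\<in>I. AE \<omega> in M. real_cond_exp M F (\<lambda>\<omega>. W ku \<omega> * indicator (A ku) \<omega>) \<omega> = W ku \<omega> * Q ku \<omega>"
    proof
      fix ku assume ku: "ku \<in> I"
      have "AE \<omega> in M. real_cond_exp M F (\<lambda>\<omega>. W ku \<omega> * indicator (A ku) \<omega>) \<omega> = W ku \<omega> * real_cond_exp M F (indicator (A ku)) \<omega>"
        by (rule real_cond_exp_mult[OF W_F _ WA_int]) (intro borel_measurable_indicator A_sets)
      with hypQ[OF ku] show "AE \<omega> in M. real_cond_exp M F (\<lambda>\<omega>. W ku \<omega> * indicator (A ku) \<omega>) \<omega> = W ku \<omega> * Q ku \<omega>"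
        by eventually_elim simp
    qed
  qed
  have ident: "(\<Sum>ku\<in>I. W ku \<omega> * Q ku \<omega>) = 0" for \<omega>
  proof -
    have "(\<Sum>ku\<in>I. W ku \<omega> * Q ku \<omega>) = (\<Sum>k\<in>UNIV. \<Sum>u\<in>Vset. ((P (X \<omega>) k * qref p (X \<omega>) ((1 / real m) *\<^sub>R Y \<omega>) u) *\<^sub>R Zinc P p m (X \<omega>) (Y \<omega>) k (Y \<omega> + u)) $ l)"
      unfolding I_def W_def Q_def by (simp add: sum.cartesian_product split_def mult.commute)
    also have "\<dots> = (\<Sum>k\<in>UNIV. \<Sum>u\<in>Vset. (P (X \<omega>) k * qref p (X \<omega>) ((1 / real m) *\<^sub>R Y \<omega>) u) *\<^sub>R Zinc P p m (X \<omega>) (Y \<omega>) k (Y \<omega> + u)) $ l"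
      by simp
    also have "\<dots> = 0" by (simp only: identity) simp
    finally show ?thesis .
  qed
  have "AE \<omega> in M. real_cond_exp M F Zf \<omega> = 0"
    using step1 step2 step3
  proof eventually_elim
    case (elim \<omega>)
    then have "real_cond_exp M F Zf \<omega> = (\<Sum>ku\<in>I. W ku \<omega> * Q ku \<omega>)" by simp
    then show ?case using ident by simp
  qed
  then show ?thesis unfolding F_def Zf_def X_def Y_def X'_def Y'_def .
qed

end


theorem proposition5p1:
  fixes P :: "'e::finite \<Rightarrow> 'e \<Rightarrow> real"
    and \<mu> :: "'e \<Rightarrow> real"
    and p :: "'e \<Rightarrow> real^'d \<Rightarrow> real^'d \<Rightarrow> real"
  assumes stoch: "stochastic P"
    and irr: "irreducible_mat P"
    and aper: "aperiodic_mat P"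
    and inv: "invariant_prob P \<mu>"
    and p_nonneg: "\<And>k y u. u \<in> Vset \<Longrightarrow> 0 \<le> p k y u"
    and p_sum: "\<And>k y. (\<Sum>u\<in>Vset. p k y u) = 1"
    and p_C2: "\<And>k u. u \<in> Vset \<Longrightarrow> C2_bounded (\<lambda>y. p k y u)"
    and centered: "\<And>y. (\<Sum>k\<in>UNIV. \<mu> k *\<^sub>R gdrift p k y) = 0"
  shows "(\<forall>(m::nat) (M::'a measure) \<xi> R. m \<ge> 1 \<and> reflected_chain P p m M \<xi> R \<longrightarrow>
           (\<forall>n l. AE \<omega> in M.
              real_cond_exp M (natfilt M \<xi> R n)
                (\<lambda>\<omega>. Zinc P p m (\<xi> n \<omega>) (R n \<omega>) (\<xi> (Suc n) \<omega>) (R (Suc n) \<omega>) $ l) \<omega> = 0))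
         \<and> (\<exists>C. \<forall>m::nat. m \<ge> 1 \<longrightarrow> (\<forall>i y. y \<in> unit_box \<longrightarrow> norm (cm P p m i y) \<le> C / real m))"
  proof -
  interpret S: setting P \<mu> p
    using stoch irr aper inv p_nonneg p_sum p_C2 centered by (rule setting.intro)
  show ?thesis
  proof
    show "\<forall>(m::nat) (M::'a measure) \<xi> R. m \<ge> 1 \<and> reflected_chain P p m M \<xi> R \<longrightarrow>
           (\<forall>n l. AE \<omega> in M.
              real_cond_exp M (natfilt M \<xi> R n)
                (\<lambda>\<omega>. Zinc P p m (\<xi> n \<omega>) (R n \<omega>) (\<xi> (Suc n) \<omega>) (R (Suc n) \<omega>) $ l) \<omega> = 0)"
      using S.martingale by blast
    obtain C where "\<forall>m::nat. m \<ge> 1 \<longrightarrow> (\<forall>i y. norm (cm P p m i y) \<le> C / real m)"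
      using S.cm_bound by blast
    then show "\<exists>C. \<forall>m::nat. m \<ge> 1 \<longrightarrow> (\<forall>i y. y \<in> unit_box \<longrightarrow> norm (cm P p m i y) \<le> C / real m)"
      by blast
  qed
qed

end
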